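(* For every integer $k\ge1$, the free commutative semigroup on $k$ generators, i.e. $((\mathbb N\cup\{0\})^k\setminus\{(0,\dots,0)\},+)$ (in particular $(\mathbb N,+)$), is left and right fairly amenable.
   Context: For a semigroup $U$, $s\in U$, $A\subseteq U$: $s$ acts injectively on the left (right) of $A$ if $a\mapsto sa$ ($a\mapsto as$) is injective on $A$. A finitely-additive probability measure on $U$ is $\mu:\mathcal P(U)\to[0,1]$ with $\mu(U)=1$, additive on disjoint sets; it is left fairly invariant if $\mu(sA)=\mu(A)$ whenever $s$ acts injectively on the left of $A$ (right fairly invariant analogously with $As$). $U$ is left (right) fairly amenable if such a measure exists. *)

theory Defs
  imports Complex_Main
begin

text \<open>A semigroup is given by a carrier set U and an operation m (closed, associative).
  Measures are functions on subsets of U; their values on non-subsets are irrelevant.\<close>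

definition fin_add_prob_measure :: "'a set \<Rightarrow> ('a set \<Rightarrow> real) \<Rightarrow> bool" where
  "fin_add_prob_measure U \<mu> \<longleftrightarrow>
     \<mu> U = 1 \<and> (\<forall>A. A \<subseteq> U \<longrightarrow> 0 \<le> \<mu> A \<and> \<mu> A \<le> 1) \<and>
     (\<forall>A B. A \<subseteq> U \<longrightarrow> B \<subseteq> U \<longrightarrow> A \<inter> B = {} \<longrightarrow> \<mu> (A \<union> B) = \<mu> A + \<mu> B)"

definition left_fairly_invariant :: "'a set \<Rightarrow> ('a \<Rightarrow> 'a \<Rightarrow> 'a) \<Rightarrow> ('a set \<Rightarrow> real) \<Rightarrow> bool" where
  "left_fairly_invariant U m \<mu> \<longleftrightarrow>
     (\<forall>s\<in>U. \<forall>A. A \<subseteq> U \<longrightarrow> inj_on (\<lambda>a. m s a) A \<longrightarrow> \<mu> ((\<lambda>a. m s a) ` A) = \<mu> A)"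

definition right_fairly_invariant :: "'a set \<Rightarrow> ('a \<Rightarrow> 'a \<Rightarrow> 'a) \<Rightarrow> ('a set \<Rightarrow> real) \<Rightarrow> bool" where
  "right_fairly_invariant U m \<mu> \<longleftrightarrow>
     (\<forall>s\<in>U. \<forall>A. A \<subseteq> U \<longrightarrow> inj_on (\<lambda>a. m a s) A \<longrightarrow> \<mu> ((\<lambda>a. m a s) ` A) = \<mu> A)"

definition left_fairly_amenable :: "'a set \<Rightarrow> ('a \<Rightarrow> 'a \<Rightarrow> 'a) \<Rightarrow> bool" where
  "left_fairly_amenable U m \<longleftrightarrow> (\<exists>\<mu>. fin_add_prob_measure U \<mu> \<and> left_fairly_invariant U m \<mu>)"

definition right_fairly_amenable :: "'a set \<Rightarrow> ('a \<Rightarrow> 'a \<Rightarrow> 'a) \<Rightarrow> bool" where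
  "right_fairly_amenable U m \<longleftrightarrow> (\<exists>\<mu>. fin_add_prob_measure U \<mu> \<and> right_fairly_invariant U m \<mu>)"

text \<open>Free commutative semigroup on k generators: nonzero vectors in (N_0)^k,
  represented as functions nat => nat vanishing from index k on, with pointwise addition.\<close>

definition free_comm_sgrp :: "nat \<Rightarrow> (nat \<Rightarrow> nat) set" where
  "free_comm_sgrp k = {x. (\<forall>i\<ge>k. x i = 0) \<and> x \<noteq> (\<lambda>_. 0)}"

definition vec_add :: "(nat \<Rightarrow> nat) \<Rightarrow> (nat \<Rightarrow> nat) \<Rightarrow> (nat \<Rightarrow> nat)" where
  "vec_add x y = (\<lambda>i. x i + y i)"

end

theory Submission
  imports Defs
begin

definition ultra :: "'a filter \<Rightarrow> bool" where
  "ultra F \<longleftrightarrow> F \<noteq> bot \<and> (\<forall>P. eventually P F \<or> eventually (\<lambda>x. \<not> P x) F)"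

lemma ex_ultra:
  fixes F :: "'a filter"
  assumes F: "F \<noteq> bot"
  shows "\<exists>U\<le>F. ultra U"
proof -
  let ?X = "{G. G \<noteq> bot \<and> G \<le> F}"
  let ?R = "{(b, a). a \<noteq> bot \<and> a \<le> b \<and> b \<le> F}"
  have bot_notin_R: "c \<in> Chains ?R \<Longrightarrow> bot \<notin> c" for c
    by (auto simp: Chains_def)
  have [simp]: "Field ?R = ?X"
    by (auto simp: Field_def bot_unique)
  have "\<exists>m\<in>Field ?R. \<forall>a\<in>Field ?R. (m, a) \<in> ?R \<longrightarrow> a = m" (is "\<exists>m\<in>?A. ?B m")
  proof (rule Zorns_po_lemma)
    show "Partial_order ?R"
      by (auto simp: partial_order_on_def preorder_on_def
          antisym_def refl_on_def trans_def Field_def bot_unique)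
    show "\<exists>u\<in>Field ?R. \<forall>a\<in>C. (a, u) \<in> ?R" if C: "C \<in> Chains ?R" for C
    proof (simp, intro exI conjI ballI)
      have Inf_C: "Inf C \<noteq> bot" "Inf C \<le> F" if "C \<noteq> {}"
      proof -
        from C that have "Inf C = bot \<longleftrightarrow> (\<exists>x\<in>C. x = bot)"
          unfolding trivial_limit_def by (intro eventually_Inf_base) (auto simp: Chains_def)
        with C show "Inf C \<noteq> bot"
          by (simp add: bot_notin_R)
        from that obtain x where "x \<in> C" by auto
        with C show "Inf C \<le> F"
          by (auto intro!: Inf_lower2[of x] simp: Chains_def)
      qed
      then have [simp]: "inf F (Inf C) = (if C = {} then F else Inf C)"
        using C by (auto simp add: inf_absorb2)
      from C show "inf F (Inf C) \<noteq> bot"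
        by (simp add: F Inf_C)
      from C show "inf F (Inf C) \<le> F"
        by (simp add: Chains_def Inf_C F)
      with C show "inf F (Inf C) \<le> x" "x \<le> F" if "x \<in> C" for x
        using that  by (auto intro: Inf_lower simp: Chains_def)
    qed
  qed
  then obtain U where U: "U \<in> ?A" "?B U" ..
  have "ultra U"
    unfolding ultra_def
  proof (intro conjI allI)
    show "U \<noteq> bot" using U by simp
    fix P
    show "eventually P U \<or> (\<forall>\<^sub>Fx in U. \<not> P x)"
    proof (rule disjCI)
      assume "\<not> (\<forall>\<^sub>Fx in U. \<not> P x)"
      then have ne: "inf U (principal {x. P x}) \<noteq> bot"
        by (simp add: trivial_limit_def eventually_inf_principal not_eventually)
      have UF0: "U \<noteq> bot" "U \<le> F" using U(1) by auto
      have "inf U (principal {x. P x}) \<le> F" using UF0 by (meson inf_le1 order_trans)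
      then have mem: "inf U (principal {x. P x}) \<in> Field ?R" using ne by simp
      have rel: "(U, inf U (principal {x. P x})) \<in> ?R" using ne UF0 by simp
      have "inf U (principal {x. P x}) = U" using bspec[OF U(2) mem] rel by (rule mp)
      moreover have "eventually P (inf U (principal {x. P x}))"
        by (simp add: eventually_inf_principal)
      ultimately show "eventually P U" by simp
    qed
  qed
  with U show ?thesis by auto
qed

lemma ultra_lim:
  fixes h :: "nat \<Rightarrow> real"
  assumes u: "ultra U" and b: "\<And>n. \<bar>h n\<bar> \<le> B"
  shows "\<exists>l. (h \<longlongrightarrow> l) U"
proof -
  define S where "S = {c. eventually (\<lambda>n. c \<le> h n) U}"
  have nb: "U \<noteq> bot" using u by (simp add: ultra_def)
  have "-B \<le> h n" for n using b[of n] by (auto simp: abs_le_iff)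
  then have mS: "-B \<in> S" unfolding S_def by (auto intro!: always_eventually)
  have bS: "c \<le> B" if "c \<in> S" for c
  proof (rule ccontr)
    assume "\<not> c \<le> B"
    with that b have "eventually (\<lambda>n. False) U" unfolding S_def
      by (auto elim!: eventually_mono simp: abs_le_iff) (meson b abs_le_D1 order.trans)
    with nb show False by (simp add: trivial_limit_def)
  qed
  have bdd: "bdd_above S" unfolding bdd_above_def using bS by blast
  define l where "l = Sup S"
  have "(h \<longlongrightarrow> l) U"
  proof (rule order_tendstoI)
    fix a assume "a < l"
    then obtain c where "c \<in> S" "a < c" using mS bdd unfolding l_def
      by (metis empty_iff less_cSup_iff)
    then show "eventually (\<lambda>n. a < h n) U" unfolding S_def
      by (auto elim: eventually_mono)
  next
    fix a assume al: "l < a"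
    show "eventually (\<lambda>n. h n < a) U"
    proof (rule ccontr)
      assume "\<not> ?thesis"
      then have "eventually (\<lambda>n. \<not> h n < a) U" using u by (auto simp: ultra_def)
      then have "a \<in> S" unfolding S_def by (auto elim: eventually_mono)
      then have "a \<le> l" unfolding l_def using bdd by (rule cSup_upper)
      with al show False by simp
    qed
  qed
  then show ?thesis by blast
qed

definition UF :: "nat filter" where
  "UF = (SOME U. U \<le> sequentially \<and> ultra U)"

lemma UF: "UF \<le> sequentially" "ultra UF"
proof -
  have "\<exists>U. U \<le> sequentially \<and> ultra U" using ex_ultra[of "sequentially :: nat filter"] by auto
  then have "UF \<le> sequentially \<and> ultra UF" unfolding UF_def by (rule someI_ex)
  then show "UF \<le> sequentially" "ultra UF" by auto
qed

lemma UF_nb: "UF \<noteq> bot" using UF(2) by (simp add: ultra_def)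

definition avg :: "(nat \<Rightarrow> real) \<Rightarrow> nat \<Rightarrow> real" where
  "avg g n = (\<Sum>j<n. g j) / real n"

definition LL :: "(nat \<Rightarrow> real) \<Rightarrow> real" where
  "LL g = Lim UF (avg g)"

lemma avg_bound:
  assumes "\<And>n. c \<le> g n" "\<And>n. g n \<le> d" "n \<ge> 1"
  shows "c \<le> avg g n \<and> avg g n \<le> d"
proof -
  have "(\<Sum>j<n. c) \<le> (\<Sum>j<n. g j)" by (rule sum_mono) (use assms in auto)
  moreover have "(\<Sum>j<n. g j) \<le> (\<Sum>j<n. d)" by (rule sum_mono) (use assms in auto)
  ultimately show ?thesis using assms(3) by (auto simp: avg_def field_simps)
qed

lemma LL_tendsto:
  assumes "\<And>n. \<bar>g n\<bar> \<le> B"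
  shows "(avg g \<longlongrightarrow> LL g) UF"
proof -
  have "\<bar>avg g n\<bar> \<le> max B 0" for n
  proof (cases "n \<ge> 1")
    case True
    have gb: "-B \<le> g m" "g m \<le> B" for m using assms[of m] by (auto simp: abs_le_iff)
    have "-B \<le> avg g n \<and> avg g n \<le> B" by (rule avg_bound) (use gb True in auto)
    then show ?thesis by (auto simp: abs_le_iff)
  next
    case False
    then have "n = 0" by simp
    then show ?thesis by (simp add: avg_def)
  qed
  then obtain l where "(avg g \<longlongrightarrow> l) UF" using ultra_lim[OF UF(2)] by blast
  then show ?thesis unfolding LL_def using tendsto_Lim UF_nb by metis
qed

lemma LL_add:
  assumes "\<And>n. \<bar>g n\<bar> \<le> B" "\<And>n. \<bar>h n\<bar> \<le> C"
  shows "LL (\<lambda>n. g n + h n) = LL g + LL h"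
proof -
  have "\<bar>g n + h n\<bar> \<le> B + C" for n using assms[of n] by auto
  then have 1: "(avg (\<lambda>n. g n + h n) \<longlongrightarrow> LL (\<lambda>n. g n + h n)) UF" by (rule LL_tendsto)
  have "avg (\<lambda>n. g n + h n) = (\<lambda>n. avg g n + avg h n)"
    by (auto simp: avg_def sum.distrib add_divide_distrib)
  moreover have "((\<lambda>n. avg g n + avg h n) \<longlongrightarrow> LL g + LL h) UF"
    using LL_tendsto[OF assms(1)] LL_tendsto[OF assms(2)] by (rule tendsto_add)
  ultimately show ?thesis using 1 UF_nb tendsto_unique by metis
qed

lemma LL_bound:
  assumes "\<And>n. c \<le> g n" "\<And>n. g n \<le> d"
  shows "c \<le> LL g \<and> LL g \<le> d"
proof -
  have "\<bar>g n\<bar> \<le> \<bar>c\<bar> + \<bar>d\<bar>" for n using assms[of n] by auto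
  then have t: "(avg g \<longlongrightarrow> LL g) UF" by (rule LL_tendsto)
  have "eventually (\<lambda>n::nat. n \<ge> 1) UF"
    using UF(1) eventually_ge_at_top[of "1::nat"] by (auto simp: le_filter_def)
  then have ev: "eventually (\<lambda>n. c \<le> avg g n \<and> avg g n \<le> d) UF"
    by (rule eventually_mono) (rule avg_bound[OF assms])
  show ?thesis
    using tendsto_le[OF UF_nb t tendsto_const] tendsto_le[OF UF_nb tendsto_const t]
      eventually_mono[OF ev] by (metis (mono_tags, lifting))
qed

lemma LL_const: "LL (\<lambda>n. c) = c"
  using LL_bound[of c "\<lambda>n. c" c] by auto

lemma sum_split: "(\<Sum>j<n+(s::nat). g j) = (\<Sum>j<n. g j) + (\<Sum>j<s. g (n+j))"
  by (induction s) (auto simp: add.assoc)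

lemma LL_shift:
  assumes b: "\<And>n. \<bar>g n\<bar> \<le> B"
  shows "LL (\<lambda>n. g (n + s)) = LL g"
proof -
  have b': "\<bar>g (n+s)\<bar> \<le> B" for n using b .
  have t1: "(avg (\<lambda>n. g (n + s)) \<longlongrightarrow> LL (\<lambda>n. g (n + s))) UF" using LL_tendsto[of "\<lambda>n. g (n + s)" B] b' by blast
  have t2: "(avg g \<longlongrightarrow> LL g) UF" using LL_tendsto b by blast
  have B0: "0 \<le> B" using b[of 0] by auto
  have diff: "\<bar>avg (\<lambda>n. g (n + s)) n - avg g n\<bar> \<le> (2 * s * B) / real n" if "n \<ge> 1" for n
  proof -
    have e1: "(\<Sum>j<s+n. g j) = (\<Sum>j<s. g j) + (\<Sum>j<n. g (j+s))"
      using sum_split[of g s n] by (simp add: add.commute)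
    have e2: "(\<Sum>j<n+s. g j) = (\<Sum>j<n. g j) + (\<Sum>j<s. g (n+j))" by (rule sum_split)
    have "(\<Sum>j<n. g (j+s)) - (\<Sum>j<n. g j) = (\<Sum>j<s. g (n+j)) - (\<Sum>j<s. g j)"
      using e1 e2 by (simp add: add.commute)
    moreover have "\<bar>\<Sum>j<s. g (n+j)\<bar> \<le> s * B"
    proof -
      have "\<bar>\<Sum>j<s. g (n+j)\<bar> \<le> (\<Sum>j<s. \<bar>g (n+j)\<bar>)" by (rule sum_abs)
      also have "\<dots> \<le> (\<Sum>j<s. B)" by (rule sum_mono) (use b in auto)
      finally show ?thesis by simp
    qed
    moreover have "\<bar>\<Sum>j<s. g j\<bar> \<le> s * B"
    proof -
      have "\<bar>\<Sum>j<s. g j\<bar> \<le> (\<Sum>j<s. \<bar>g j\<bar>)" by (rule sum_abs)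
      also have "\<dots> \<le> (\<Sum>j<s. B)" by (rule sum_mono) (use b in auto)
      finally show ?thesis by simp
    qed
    ultimately have "\<bar>(\<Sum>j<n. g (j+s)) - (\<Sum>j<n. g j)\<bar> \<le> 2 * s * B" by linarith
    moreover have "avg (\<lambda>n. g (n + s)) n - avg g n = ((\<Sum>j<n. g (j+s)) - (\<Sum>j<n. g j)) / real n"
      by (simp add: avg_def diff_divide_distrib)
    ultimately show ?thesis using that by (simp add: divide_right_mono)
  qed
  have z: "((\<lambda>n. (2 * s * B) / real n) \<longlongrightarrow> 0) sequentially"
    by (intro tendsto_divide_0[OF tendsto_const] filterlim_at_top_imp_at_infinity[OF filterlim_real_sequentially])
  have ev: "eventually (\<lambda>n. norm (avg (\<lambda>n. g (n + s)) n - avg g n) \<le> norm ((2 * s * B) / real n) * 1) sequentially"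
    by (rule eventually_mono[OF eventually_ge_at_top[of "1::nat"]]) (use diff B0 in auto)
  have "((\<lambda>n. avg (\<lambda>n. g (n + s)) n - avg g n) \<longlongrightarrow> 0) sequentially"
    by (rule tendsto_0_le[OF z ev])
  then have "((\<lambda>n. avg (\<lambda>n. g (n + s)) n - avg g n) \<longlongrightarrow> 0) UF"
    using UF(1) tendsto_mono by blast
  then have "((\<lambda>n. avg (\<lambda>n. g (n + s)) n) \<longlongrightarrow> 0 + LL g) UF"
    using tendsto_add[OF _ t2] by fastforce
  then show ?thesis using t1 UF_nb tendsto_unique by fastforce
qed

lemma LL_zero_pos:
  assumes "\<And>n. n \<ge> 1 \<Longrightarrow> g n = 0" "\<And>n. \<bar>g n\<bar> \<le> B"
  shows "LL g = 0"
proof -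
  have "LL g = LL (\<lambda>n. g (n + 1))" using LL_shift[of g B 1] assms(2) by simp
  also have "\<dots> = LL (\<lambda>n. 0)" using assms(1) by simp
  finally show ?thesis by (simp add: LL_const)
qed


fun II :: "nat \<Rightarrow> ((nat \<Rightarrow> nat) \<Rightarrow> real) \<Rightarrow> (nat \<Rightarrow> nat) \<Rightarrow> real" where
  "II 0 f x = f x"
| "II (Suc j) f x = LL (\<lambda>n. II j f (x(j:=n)))"

lemma II_bound:
  assumes "\<And>y. c \<le> f y \<and> f y \<le> d"
  shows "c \<le> II j f x \<and> II j f x \<le> d"
proof (induction j arbitrary: x)
  case 0
  then show ?case using assms by simp
next
  case (Suc j)
  have hb: "c \<le> II j f (x(j:=n))" "II j f (x(j:=n)) \<le> d" for n using Suc by auto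
  have "c \<le> LL (\<lambda>n. II j f (x(j:=n))) \<and> LL (\<lambda>n. II j f (x(j:=n))) \<le> d"
    by (rule LL_bound) (use hb in auto)
  then show ?case by simp
qed

lemma II_abs:
  assumes "\<And>y. \<bar>f y\<bar> \<le> B"
  shows "\<bar>II j f x\<bar> \<le> B"
proof -
  have "-B \<le> f y \<and> f y \<le> B" for y using assms[of y] by (auto simp: abs_le_iff)
  then have "-B \<le> II j f x \<and> II j f x \<le> B" by (rule II_bound)
  then show ?thesis by (auto simp: abs_le_iff)
qed

lemma II_add:
  assumes "\<And>y. \<bar>f y\<bar> \<le> B" "\<And>y. \<bar>g y\<bar> \<le> C"
  shows "II j (\<lambda>y. f y + g y) x = II j f x + II j g x"
proof (induction j arbitrary: x)
  case 0
  then show ?case by simp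
next
  case (Suc j)
  have "II (Suc j) (\<lambda>y. f y + g y) x = LL (\<lambda>n. II j f (x(j:=n)) + II j g (x(j:=n)))"
    by (simp only: II.simps Suc.IH)
  also have "\<dots> = LL (\<lambda>n. II j f (x(j:=n))) + LL (\<lambda>n. II j g (x(j:=n)))"
    by (rule LL_add) (use II_abs assms in blast)+
  finally show ?case by simp
qed

lemma II_cong:
  assumes "\<And>y. (\<forall>i\<ge>j. y i = x i) \<Longrightarrow> f y = g y"
  shows "II j f x = II j g x"
  using assms
proof (induction j arbitrary: x)
  case 0
  show ?case using "0.prems"[of x] by simp
next
  case (Suc j)
  have "II j f (x(j:=n)) = II j g (x(j:=n))" for n
    by (rule Suc.IH) (rule Suc.prems, auto)
  then show ?case by simp
qed

lemma II_loc:
  assumes "\<forall>i\<ge>j. x i = x' i"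
  shows "II j f x = II j f x'"
  using assms
proof (induction j arbitrary: x x')
  case 0
  then have "x = x'" by auto
  then show ?case by simp
next
  case (Suc j)
  have "II j f (x(j:=n)) = II j f (x'(j:=n))" for n
    by (rule Suc.IH) (use Suc.prems in auto)
  then show ?case by simp
qed

lemma II_const: "II j (\<lambda>y. c) x = c"
  using II_bound[of c "\<lambda>y. c" c j x] by simp

lemma II_shift:
  assumes "\<And>y. \<bar>f y\<bar> \<le> B"
  shows "II j (\<lambda>y. f (vec_add y s)) x = II j f (vec_add x s)"
proof (induction j arbitrary: x)
  case 0
  then show ?case by simp
next
  case (Suc j)
  have e: "vec_add (x(j:=n)) s = (vec_add x s)(j := n + s j)" for n
    by (auto simp: vec_add_def)
  have "II (Suc j) (\<lambda>y. f (vec_add y s)) x = LL (\<lambda>n. II j f ((vec_add x s)(j := n + s j)))"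
    by (simp only: II.simps Suc.IH e)
  also have "\<dots> = LL (\<lambda>n. II j f ((vec_add x s)(j := n)))"
    by (rule LL_shift[of _ B]) (use II_abs assms in blast)
  finally show ?case by simp
qed

definition mu :: "nat \<Rightarrow> (nat \<Rightarrow> nat) set \<Rightarrow> real" where
  "mu k A = II k (\<lambda>y. if y \<in> A then 1 else 0) (\<lambda>_. 0)"

lemma ind_abs: "\<bar>(if y \<in> A then 1 else 0 :: real)\<bar> \<le> 1" by simp

lemma mu_inv:
  assumes "\<forall>i\<ge>k. s i = 0" "\<And>y. (vec_add y s \<in> T) = (y \<in> A)"
  shows "mu k T = mu k A"
proof -
  have "mu k A = II k (\<lambda>y. (\<lambda>z. if z \<in> T then 1 else 0) (vec_add y s)) (\<lambda>_. 0)"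
    unfolding mu_def using assms(2) by simp
  also have "\<dots> = II k (\<lambda>z. if z \<in> T then 1 else 0) (vec_add (\<lambda>_. 0) s)"
    by (rule II_shift[of _ 1]) simp
  also have "\<dots> = mu k T" unfolding mu_def
    by (rule II_loc) (use assms(1) in \<open>auto simp: vec_add_def\<close>)
  finally show ?thesis by simp
qed

lemma vadd_comm: "vec_add a b = vec_add b a"
  by (auto simp: vec_add_def fun_eq_iff)

lemma vadd_cancel: "vec_add y s = vec_add a s \<longleftrightarrow> y = a"
  by (auto simp: vec_add_def fun_eq_iff)

lemma mu_fin_add:
  assumes "k \<ge> 1"
  shows "fin_add_prob_measure (free_comm_sgrp k) (mu k)"
proof -
  let ?U = "free_comm_sgrp k"
  let ?z = "(\<lambda>_. 0) :: nat \<Rightarrow> nat"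
  obtain j where kj: "k = Suc j" using assms by (cases k) auto
  define h where "h = (\<lambda>y. if y = ?z then 1 else 0 :: real)"
  have hb: "\<bar>h y\<bar> \<le> 1" for y by (simp add: h_def)
  have h0: "II k h ?z = 0"
  proof -
    have "II k h ?z = LL (\<lambda>n. II j h (?z(j:=n)))" by (simp only: kj II.simps)
    also have "\<dots> = 0"
    proof (rule LL_zero_pos[of _ 1])
      fix n :: nat assume n: "n \<ge> 1"
      have "II j h (?z(j:=n)) = II j (\<lambda>_. 0) (?z(j:=n))"
      proof (rule II_cong)
        fix y :: "nat \<Rightarrow> nat" assume "\<forall>i\<ge>j. y i = (?z(j:=n)) i"
        then have "y j = n" by auto
        with n have "y \<noteq> ?z" by auto
        then show "h y = 0" by (simp add: h_def)
      qed
      then show "II j h (?z(j:=n)) = 0" by (simp add: II_const)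
    next
      fix n show "\<bar>II j h (?z(j:=n))\<bar> \<le> 1" by (rule II_abs) (rule hb)
    qed
    finally show ?thesis .
  qed
  have mh: "II k (\<lambda>y. - h y) ?z = 0"
  proof -
    have "II k (\<lambda>y. - h y + h y) ?z = II k (\<lambda>y. - h y) ?z + II k h ?z"
      by (rule II_add[of _ 1 _ 1]) (use hb in auto)
    then show ?thesis using h0 by (simp add: II_const)
  qed
  have mU: "mu k ?U = 1"
  proof -
    have "mu k ?U = II k (\<lambda>y. 1 + - h y) ?z" unfolding mu_def
    proof (rule II_cong)
      fix y :: "nat \<Rightarrow> nat" assume "\<forall>i\<ge>k. y i = ?z i"
      then show "(if y \<in> ?U then 1 else 0) = 1 + - h y"
        by (auto simp: free_comm_sgrp_def h_def)
    qed
    also have "\<dots> = II k (\<lambda>y. 1) ?z + II k (\<lambda>y. - h y) ?z"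
      by (rule II_add[of _ 1 _ 1]) (use hb in auto)
    also have "\<dots> = 1" using mh by (simp add: II_const)
    finally show ?thesis .
  qed
  show ?thesis unfolding fin_add_prob_measure_def
  proof (intro conjI allI impI mU)
    fix A :: "(nat \<Rightarrow> nat) set"
    have "0 \<le> mu k A \<and> mu k A \<le> 1" unfolding mu_def by (rule II_bound) auto
    then show "0 \<le> mu k A" "mu k A \<le> 1" by auto
  next
    fix A B :: "(nat \<Rightarrow> nat) set"
    assume d: "A \<inter> B = {}"
    have "(\<lambda>y. if y \<in> A \<union> B then 1 else 0 :: real) = (\<lambda>y. (if y \<in> A then 1 else 0) + (if y \<in> B then 1 else 0))"
      using d by (auto simp: fun_eq_iff)
    then have "mu k (A \<union> B) = II k (\<lambda>y. (if y \<in> A then 1 else 0) + (if y \<in> B then 1 else 0)) ?z"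
      unfolding mu_def by simp
    also have "\<dots> = mu k A + mu k B" unfolding mu_def
      by (rule II_add[of _ 1 _ 1]) auto
    finally show "mu k (A \<union> B) = mu k A + mu k B" .
  qed
qed

theorem mainTheorem17:
  fixes k :: nat
  assumes "k \<ge> 1"
  shows "left_fairly_amenable (free_comm_sgrp k) vec_add \<and> right_fairly_amenable (free_comm_sgrp k) vec_add"
proof -
  have F: "fin_add_prob_measure (free_comm_sgrp k) (mu k)" by (rule mu_fin_add[OF assms])
  have L: "left_fairly_invariant (free_comm_sgrp k) vec_add (mu k)"
    unfolding left_fairly_invariant_def
  proof (intro ballI allI impI)
    fix s A assume s: "s \<in> free_comm_sgrp k"
    show "mu k ((\<lambda>a. vec_add s a) ` A) = mu k A"
    proof (rule mu_inv)
      show "\<forall>i\<ge>k. s i = 0" using s by (simp add: free_comm_sgrp_def)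
      fix y show "(vec_add y s \<in> (\<lambda>a. vec_add s a) ` A) = (y \<in> A)"
        by (auto simp: vadd_cancel vadd_comm[of s])
    qed
  qed
  have R: "right_fairly_invariant (free_comm_sgrp k) vec_add (mu k)"
    unfolding right_fairly_invariant_def
  proof (intro ballI allI impI)
    fix s A assume s: "s \<in> free_comm_sgrp k"
    show "mu k ((\<lambda>a. vec_add a s) ` A) = mu k A"
    proof (rule mu_inv)
      show "\<forall>i\<ge>k. s i = 0" using s by (simp add: free_comm_sgrp_def)
      fix y show "(vec_add y s \<in> (\<lambda>a. vec_add a s) ` A) = (y \<in> A)"
        by (auto simp: vadd_cancel)
    qed
  qed
  show ?thesis unfolding left_fairly_amenable_def right_fairly_amenable_def using F L R by blast
qed

end
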